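(* Let $\Omega\subset\mathbb{R}^N$ be a domain satisfying condition $(\mathrm{S}_r)$ for some $r>0$. For each $x_0\in\partial\Omega$, with $a,b$ as in $(\mathrm{S}_r)$ for $x_0$, define $\vec p(x_0)=\frac{b-a}{|b-a|}$ (this is well defined). Then $|\vec p(x_0)-\vec p(y_0)|\le\frac1r|x_0-y_0|$ for all $x_0,y_0\in\partial\Omega$.
   Context: A domain is an open connected set. $B_r(a)$ denotes the open Euclidean ball. Condition $(\mathrm{S}_r)$: for every $x_0\in\partial\Omega$ there exist $a,b\in\mathbb{R}^N$ such that $B_r(a)\subset\Omega$, $B_r(b)\subset\mathbb{R}^N\setminus\bar\Omega$ and $|x_0-a|=|x_0-b|=r$. *)

theory Defs
  imports "HOL-Analysis.Analysis"
begin

definition domain :: "'a::euclidean_space set \<Rightarrow> bool" where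
  "domain \<Omega> \<longleftrightarrow> open \<Omega> \<and> connected \<Omega>"

definition Sr_balls :: "real \<Rightarrow> 'a::euclidean_space set \<Rightarrow> 'a \<Rightarrow> 'a \<Rightarrow> 'a \<Rightarrow> bool" where
  "Sr_balls r \<Omega> x0 a b \<longleftrightarrow>
     ball a r \<subseteq> \<Omega> \<and> ball b r \<subseteq> - closure \<Omega> \<and> dist x0 a = r \<and> dist x0 b = r"

definition cond_S :: "real \<Rightarrow> 'a::euclidean_space set \<Rightarrow> bool" where
  "cond_S r \<Omega> \<longleftrightarrow> (\<forall>x0\<in>frontier \<Omega>. \<exists>a b. Sr_balls r \<Omega> x0 a b)"

definition pvec :: "real \<Rightarrow> 'a::euclidean_space set \<Rightarrow> 'a \<Rightarrow> 'a" where
  "pvec r \<Omega> x0 = (SOME v. \<exists>a b. Sr_balls r \<Omega> x0 a b \<and> v = (b - a) /\<^sub>R norm (b - a))"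

end

theory Submission
  imports Defs
begin

lemma para: "norm (x + y)^2 + norm (x - y)^2 = 2 * norm x ^ 2 + 2 * norm (y::'a::real_inner) ^ 2"
  by (simp add: power2_norm_eq_inner inner_add_left inner_add_right inner_diff_left inner_diff_right inner_commute)

lemma disj:
  fixes c e :: "'a::euclidean_space"
  assumes "ball c r \<subseteq> \<Omega>" "ball e r \<subseteq> - closure \<Omega>"
  shows "2 * r \<le> dist c e"
proof (rule ccontr)
  assume "\<not> 2 * r \<le> dist c e"
  hence "dist c (midpoint c e) < r" "dist e (midpoint c e) < r"
    by (auto simp: dist_midpoint)
  hence "midpoint c e \<in> \<Omega>" "midpoint c e \<in> - closure \<Omega>" using assms by auto
  thus False using closure_subset by blast
qed

lemma eqv:
  fixes u v :: "'a::real_inner"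
  assumes "norm u = r" "norm v = r" "2 * r \<le> norm (u + v)" "r > 0"
  shows "u = v"
proof -
  have "(2*r)^2 \<le> norm (u+v)^2" using assms by (intro power_mono) auto
  moreover have "norm (u + v)^2 + norm (u - v)^2 = 4 * r^2" using para[of u v] assms by simp
  moreover have "(2*r)^2 = 4 * r^2" by (simp add: power_mult_distrib)
  ultimately have "norm (u - v)^2 \<le> 0" by linarith
  hence "norm (u - v) = 0" by simp
  thus ?thesis by simp
qed

lemma mid:
  assumes "Sr_balls r \<Omega> x0 a b" "r > 0"
  shows "b - x0 = x0 - a" "norm (b - a) = 2 * r"
    "(b - a) /\<^sub>R norm (b - a) = (x0 - a) /\<^sub>R r"
proof -
  have d: "2 * r \<le> dist a b" using assms disj unfolding Sr_balls_def by blast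
  have "(b - x0) + (x0 - a) = b - a" by simp
  hence n: "2 * r \<le> norm ((b - x0) + (x0 - a))" using d by (simp add: dist_norm norm_minus_commute)
  show e: "b - x0 = x0 - a"
    by (rule eqv[OF _ _ n assms(2)]) (use assms in \<open>auto simp: Sr_balls_def dist_norm norm_minus_commute\<close>)
  have "b - a = (b - x0) + (x0 - a)" by simp
  hence "b - a = 2 *\<^sub>R (x0 - a)" using e by (simp add: scaleR_2)
  moreover have "norm (x0 - a) = r" using assms by (auto simp: Sr_balls_def dist_norm)
  ultimately show "norm (b - a) = 2 * r" "(b - a) /\<^sub>R norm (b - a) = (x0 - a) /\<^sub>R r"
    using assms(2) by auto
qed

lemma uniq:
  assumes "Sr_balls r \<Omega> x0 a b" "Sr_balls r \<Omega> x0 a' b'" "r > 0"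
  shows "x0 - a = x0 - a'"
proof -
  have d: "2 * r \<le> dist a b'" using assms disj unfolding Sr_balls_def by blast
  have e1: "b' - a = (x0 - a) + (x0 - a')" using mid(1)[OF assms(2,3)] by (simp add: algebra_simps)
  have e2: "dist a b' = norm (b' - a)" by (metis dist_commute dist_norm)
  have n: "2 * r \<le> norm ((x0 - a) + (x0 - a'))" using d unfolding e2 e1 .
  show ?thesis
    by (rule eqv[OF _ _ n assms(3)]) (use assms in \<open>auto simp: Sr_balls_def dist_norm norm_minus_commute\<close>)
qed

lemma pvec_eq:
  assumes "Sr_balls r \<Omega> x0 a b" "r > 0"
  shows "pvec r \<Omega> x0 = (x0 - a) /\<^sub>R r"
proof -
  have "pvec r \<Omega> x0 = (b - a) /\<^sub>R norm (b - a)"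
    unfolding pvec_def
  proof (rule someI2[where a = "(b - a) /\<^sub>R norm (b - a)"])
    show "\<exists>a' b'. Sr_balls r \<Omega> x0 a' b' \<and> (b - a) /\<^sub>R norm (b - a) = (b' - a') /\<^sub>R norm (b' - a')"
      using assms by blast
  next
    fix v assume "\<exists>a' b'. Sr_balls r \<Omega> x0 a' b' \<and> v = (b' - a') /\<^sub>R norm (b' - a')"
    then obtain a' b' where "Sr_balls r \<Omega> x0 a' b'" "v = (b' - a') /\<^sub>R norm (b' - a')" by blast
    thus "v = (b - a) /\<^sub>R norm (b - a)"
      using mid(3)[OF assms] mid(3)[of r \<Omega> x0 a' b'] uniq[OF assms(1) _ assms(2), of a' b'] assms(2)
      by simp
  qed
  thus ?thesis using mid(3)[OF assms] by simp
qed

lemma lip: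
  assumes "Sr_balls r \<Omega> x0 a b" "Sr_balls r \<Omega> y0 a' b'" "r > 0"
  shows "norm ((x0 - a) - (y0 - a')) \<le> norm (x0 - y0)"
proof -
  define u where "u = x0 - a"
  define w where "w = y0 - a'"
  define d where "d = x0 - y0"
  have bu: "b = x0 + u" using mid(1)[OF assms(1,3)] unfolding u_def by (simp add: algebra_simps)
  have bw: "b' = y0 + w" using mid(1)[OF assms(2,3)] unfolding w_def by (simp add: algebra_simps)
  have nu: "norm u = r" "norm w = r" using assms unfolding u_def w_def by (auto simp: Sr_balls_def dist_norm)
  have d1: "2 * r \<le> dist a b'" using assms disj unfolding Sr_balls_def by blast
  have d2: "2 * r \<le> dist a' b" using assms disj unfolding Sr_balls_def by blast
  have "dist a b' = norm (d - (u + w))" unfolding bw d_def u_def w_def dist_norm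
    by (simp add: norm_minus_commute algebra_simps)
  hence e1: "(2*r)^2 \<le> norm (d - (u + w))^2" using d1 assms(3) by (intro power_mono) auto
  have "dist a' b = norm (d + (u + w))" unfolding bu d_def u_def w_def dist_norm
    by (simp add: norm_minus_commute algebra_simps)
  hence e2: "(2*r)^2 \<le> norm (d + (u + w))^2" using d2 assms(3) by (intro power_mono) auto
  have p1: "norm (d + (u + w))^2 + norm (d - (u + w))^2 = 2 * norm d ^ 2 + 2 * norm (u + w) ^ 2"
    by (rule para)
  have p2: "norm (u + w)^2 + norm (u - w)^2 = 4 * r^2" using para[of u w] nu by simp
  have "(2*r)^2 = 4 * r^2" by (simp add: power_mult_distrib)
  hence "norm (u - w)^2 \<le> norm d ^ 2" using p1 p2 e1 e2 by linarith
  hence "norm (u - w) \<le> norm d" by (rule power2_le_imp_le) simp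
  thus ?thesis unfolding u_def w_def d_def .
qed

theorem lemma2p2:
  fixes \<Omega> :: "'a::euclidean_space set" and r :: real
  assumes "domain \<Omega>" and "r > 0" and "cond_S r \<Omega>"
  shows "(\<forall>x0\<in>frontier \<Omega>. \<forall>a b. Sr_balls r \<Omega> x0 a b \<longrightarrow>
            pvec r \<Omega> x0 = (b - a) /\<^sub>R norm (b - a))
     \<and> (\<forall>x0\<in>frontier \<Omega>. \<forall>y0\<in>frontier \<Omega>.
            norm (pvec r \<Omega> x0 - pvec r \<Omega> y0) \<le> dist x0 y0 / r)"
proof (intro conjI ballI allI impI)
  fix x0 a b assume "Sr_balls r \<Omega> x0 a b"
  thus "pvec r \<Omega> x0 = (b - a) /\<^sub>R norm (b - a)" using pvec_eq mid(3) assms(2) by metis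
next
  fix x0 y0 assume "x0 \<in> frontier \<Omega>" "y0 \<in> frontier \<Omega>"
  then obtain a b a' b' where s: "Sr_balls r \<Omega> x0 a b" "Sr_balls r \<Omega> y0 a' b'"
    using assms(3) unfolding cond_S_def by blast
  have "pvec r \<Omega> x0 - pvec r \<Omega> y0 = ((x0 - a) - (y0 - a')) /\<^sub>R r"
    unfolding pvec_eq[OF s(1) assms(2)] pvec_eq[OF s(2) assms(2)] by (simp add: scaleR_diff_right)
  hence "norm (pvec r \<Omega> x0 - pvec r \<Omega> y0) = norm (((x0 - a) - (y0 - a')) /\<^sub>R r)"
    by (rule arg_cong)
  also have "\<dots> = norm ((x0 - a) - (y0 - a')) / r"
    using assms(2) by (simp add: divide_inverse_commute)
  also have "\<dots> \<le> dist x0 y0 / r"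
    using lip[OF s assms(2)] assms(2) by (simp add: dist_norm divide_right_mono)
  finally show "norm (pvec r \<Omega> x0 - pvec r \<Omega> y0) \<le> dist x0 y0 / r" .
qed

end
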